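(* Let $d,q\geq 2$ be integers. Then: (a) for every $\theta_w,\theta_1,\theta_0\in\mathbb{Z}$, the density $\delta(q,d;0,\theta_w,0,\theta_1,\theta_0)$ exists; (b) if $d\mid q^n$ for some $n\in\mathbb{N}$, then the density $\delta(q,d;\mathbf{s})$ exists for every $\mathbf{s}\in\mathbb{Z}^5$.
   Context: For an integer $q\geq 2$ and $n\in\mathbb{N}$: $v_q(0)=0$ and, for $n>0$, $v_q(n)=\max\{k: q^k\mid n\}$; $w_q(n)=\sum_{i=0}^n v_q(i)$; $u_q(n)=\sum_{i=0}^n w_q(i)$. For $\mathbf{s}=(\theta_u,\theta_w,\theta_2,\theta_1,\theta_0)\in\mathbb{Z}^5$, $\gamma(A,q,d;\mathbf{s})$ is the number of $n\in\mathbb{N}$, $n<A$, with $\theta_u u_q(n)+\theta_w w_q(n)+\theta_2\frac{n(n+1)}{2}+\theta_1 n+\theta_0\equiv 0\pmod d$, and $\delta(q,d;\mathbf{s})=\lim_{N\to\infty}\gamma(N,q,d;\mathbf{s})/N$ (when the limit exists). *)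

theory Defs
  imports Complex_Main
begin

definition vq :: "nat \<Rightarrow> nat \<Rightarrow> nat" where
  "vq q n = (if n = 0 then 0 else (GREATEST k. q ^ k dvd n))"

definition wq :: "nat \<Rightarrow> nat \<Rightarrow> nat" where
  "wq q n = (\<Sum>i\<le>n. vq q i)"

definition uq :: "nat \<Rightarrow> nat \<Rightarrow> nat" where
  "uq q n = (\<Sum>i\<le>n. wq q i)"

definition seqval :: "nat \<Rightarrow> int \<times> int \<times> int \<times> int \<times> int \<Rightarrow> nat \<Rightarrow> int" where
  "seqval q s n = (case s of (tu, tw, t2, t1, t0) \<Rightarrow>
     tu * int (uq q n) + tw * int (wq q n) + t2 * int (n * (n + 1) div 2) + t1 * int n + t0)"

definition gamma :: "nat \<Rightarrow> nat \<Rightarrow> nat \<Rightarrow> int \<times> int \<times> int \<times> int \<times> int \<Rightarrow> nat" where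
  "gamma A q d s = card {n. n < A \<and> (seqval q s n) mod (int d) = 0}"

definition density_exists :: "nat \<Rightarrow> nat \<Rightarrow> int \<times> int \<times> int \<times> int \<times> int \<Rightarrow> bool" where
  "density_exists q d s = convergent (\<lambda>N. real (gamma N q d s) / real N)"

end

theory Submission
  imports Defs
begin


lemma vq_char:
  assumes q: "q \<ge> 2" and n: "n > 0" and k1: "q ^ k dvd n" and k2: "\<not> q ^ Suc k dvd n"
  shows "vq q n = k"
proof -
  have bnd: "\<And>y. q ^ y dvd n \<Longrightarrow> y \<le> n"
  proof -
    fix y assume "q ^ y dvd n"
    then have "q ^ y \<le> n" using n by (simp add: dvd_imp_le)
    moreover have "y < 2 ^ y" by (rule less_exp)
    moreover have "(2::nat) ^ y \<le> q ^ y" using q by (simp add: power_mono)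
    ultimately show "y \<le> n" by linarith
  qed
  have ge: "k \<le> (GREATEST k. q ^ k dvd n)" using k1 bnd by (rule Greatest_le_nat)
  have gd: "q ^ (GREATEST k. q ^ k dvd n) dvd n" using k1 bnd by (rule GreatestI_nat)
  have "\<not> k < (GREATEST k. q ^ k dvd n)"
  proof
    assume "k < (GREATEST k. q ^ k dvd n)"
    then have "q ^ Suc k dvd q ^ (GREATEST k. q ^ k dvd n)" by (intro le_imp_power_dvd) simp
    with gd k2 show False using dvd_trans by blast
  qed
  with ge show ?thesis using n by (simp add: vq_def)
qed

lemma vq_ex:
  assumes q: "q \<ge> 2" and n: "n > 0"
  shows "q ^ vq q n dvd n \<and> \<not> q ^ Suc (vq q n) dvd n"
proof -
  have bnd: "\<And>y. q ^ y dvd n \<Longrightarrow> y \<le> n"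
  proof -
    fix y assume "q ^ y dvd n"
    then have "q ^ y \<le> n" using n by (simp add: dvd_imp_le)
    moreover have "y < 2 ^ y" by (rule less_exp)
    moreover have "(2::nat) ^ y \<le> q ^ y" using q by (simp add: power_mono)
    ultimately show "y \<le> n" by linarith
  qed
  have gd: "q ^ (GREATEST k. q ^ k dvd n) dvd n" by (rule GreatestI_nat[of _ 0, OF _ bnd]) simp
  have ns: "\<not> q ^ Suc (GREATEST k. q ^ k dvd n) dvd n"
  proof
    assume "q ^ Suc (GREATEST k. q ^ k dvd n) dvd n"
    then have "Suc (GREATEST k. q ^ k dvd n) \<le> (GREATEST k. q ^ k dvd n)"
      by (rule Greatest_le_nat[OF _ bnd])
    then show False by simp
  qed
  show ?thesis using gd ns n by (simp add: vq_def)
qed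

lemma vq_nondvd: "q \<ge> 2 \<Longrightarrow> n > 0 \<Longrightarrow> \<not> q dvd n \<Longrightarrow> vq q n = 0"
  by (rule vq_char) auto

lemma vq_mult: assumes q: "q \<ge> 2" and m: "m > 0" shows "vq q (q * m) = Suc (vq q m)"
proof -
  from vq_ex[OF q m] have a: "q ^ vq q m dvd m" and b: "\<not> q ^ Suc (vq q m) dvd m" by auto
  show ?thesis
  proof (rule vq_char[OF q])
    show "0 < q * m" using q m by simp
    show "q ^ Suc (vq q m) dvd q * m" using a by simp
    show "\<not> q ^ Suc (Suc (vq q m)) dvd q * m" using b q by simp
  qed
qed

lemma wq_Suc: "wq q (Suc n) = wq q n + vq q (Suc n)"
  by (simp add: wq_def)

lemma wq_0: "wq q 0 = 0" by (simp add: wq_def vq_def)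

lemma wq_step: assumes q: "q \<ge> 2" and t: "t < q" shows "wq q (q * a + t) = a + wq q a"
  using t
proof (induction a arbitrary: t)
  case 0
  then show ?case
  proof (induction t)
    case 0 then show ?case by (simp add: wq_0)
  next
    case (Suc t)
    have "vq q (Suc t) = 0" using Suc q by (intro vq_nondvd) (auto dest: dvd_imp_le)
    then show ?case using Suc by (simp add: wq_Suc)
  qed
next
  case (Suc a)
  then show ?case
  proof (induction t)
    case 0
    have e: "q * Suc a = Suc (q * a + (q - 1))" using q by simp
    have "vq q (q * Suc a) = Suc (vq q (Suc a))" using q by (intro vq_mult) auto
    have i: "wq q (q * a + (q - 1)) = a + wq q a" using Suc.IH[of "q - 1"] q by simp
    have "wq q (q * Suc a + 0) = wq q (q * a + (q - 1)) + vq q (q * Suc a)"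
      using wq_Suc[of q "q * a + (q - 1)"] e by (metis add_0_right)
    also have "\<dots> = Suc a + wq q (Suc a)" using i \<open>vq q (q * Suc a) = _\<close> by (simp add: wq_Suc)
    finally show ?case .
  next
    case (Suc t)
    have nd: "\<not> q dvd Suc (q * Suc a + t)"
    proof
      assume "q dvd Suc (q * Suc a + t)"
      then have "q dvd Suc t" by (metis add_Suc_right dvd_add_right_iff dvd_triv_left)
      then show False using Suc.prems by (auto dest: dvd_imp_le)
    qed
    have "vq q (Suc (q * Suc a + t)) = 0" using q nd by (intro vq_nondvd) auto
    then show ?case using Suc by (simp add: wq_Suc)
  qed
qed




lemma sum_diff_norm:
  fixes x :: "nat \<Rightarrow> 'a::real_normed_vector"
  assumes bd: "\<And>n. norm (x n) \<le> 1" and mn: "m \<le> n"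
  shows "norm ((\<Sum>i<n. x i) - (\<Sum>i<m. x i)) \<le> real (n - m)"
proof -
  have "(\<Sum>i<n. x i) = (\<Sum>i<m. x i) + (\<Sum>i\<in>{m..<n}. x i)"
    using mn by (metis atLeast0LessThan sum.atLeastLessThan_concat zero_le)
  then have "(\<Sum>i<n. x i) - (\<Sum>i<m. x i) = (\<Sum>i\<in>{m..<n}. x i)" by simp
  also have "norm \<dots> \<le> (\<Sum>i\<in>{m..<n}. norm (x i))" by (rule norm_sum)
  also have "\<dots> \<le> (\<Sum>i\<in>{m..<n}. 1)" by (rule sum_mono) (rule bd)
  also have "\<dots> = real (n - m)" by simp
  finally show ?thesis .
qed

lemma sum_norm_le:
  fixes x :: "nat \<Rightarrow> 'a::real_normed_vector"
  assumes bd: "\<And>n. norm (x n) \<le> 1"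
  shows "norm (\<Sum>i<n. x i) \<le> real n"
  using sum_diff_norm[OF bd, of 0 n] by simp

lemma avg_lim:
  fixes x :: "nat \<Rightarrow> 'a::real_normed_vector" and c :: 'a
  assumes bd: "\<And>n. norm (x n) \<le> 1"
  and H: "\<And>e. e > 0 \<Longrightarrow> \<exists>P\<ge>1. \<exists>M0. \<forall>M\<ge>M0. norm ((1 / real (P*M)) *\<^sub>R (\<Sum>n<P*M. x n) - c) \<le> e"
  shows "(\<lambda>N. (1 / real N) *\<^sub>R (\<Sum>n<N. x n)) \<longlonglongrightarrow> c"
proof (rule LIMSEQ_I)
  fix r :: real assume r: "r > 0"
  define S where "S N = (\<Sum>n<N. x n)" for N
  define av where "av N = (1 / real N) *\<^sub>R S N" for N
  obtain P M0 where P: "P \<ge> 1" and M0: "\<forall>M\<ge>M0. norm (av (P*M) - c) \<le> r/2"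
    using H[of "r/2"] r unfolding av_def S_def by auto
  obtain K :: nat where K: "real K > 8 * real P / r" using reals_Archimedean2 by blast
  show "\<exists>no. \<forall>N\<ge>no. norm ((1 / real N) *\<^sub>R (\<Sum>n<N. x n) - c) < r"
  proof (intro exI allI impI)
    fix N assume N: "N \<ge> P * (M0 + 1) + K"
    define M where "M = N div P"
    have MN1: "P * M \<le> N" unfolding M_def by (simp add: mult.commute)
    have MN2: "N < P * M + P" unfolding M_def using P
      by (metis add.commute div_mult_mod_eq mod_less_divisor mult.commute nat_add_left_cancel_less
          less_le_trans zero_less_one)
    have "P * (M0 + 1) \<le> N" using N by simp
    then have "M0 + 1 \<le> M" unfolding M_def using P
      by (metis div_le_mono nonzero_mult_div_cancel_left not_one_le_zero)
    then have MM0: "M \<ge> M0" and M1: "M \<ge> 1" by auto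
    have PM0: "real (P * M) > 0" using P M1 by simp
    have N0: "real N > 0" using PM0 MN1 by linarith
    have NK: "real N \<ge> real K" using N by simp
    have d1: "norm (S N - S (P*M)) \<le> real (N - P*M)"
      unfolding S_def by (rule sum_diff_norm[OF bd MN1])
    have avb: "norm (av (P*M)) \<le> 1"
    proof -
      have "norm (av (P*M)) = norm (S (P*M)) / real (P*M)" unfolding av_def by simp
      also have "\<dots> \<le> real (P*M) / real (P*M)"
        unfolding S_def using PM0 by (intro divide_right_mono sum_norm_le[OF bd]) simp
      finally show ?thesis using PM0 by (simp split: if_splits)
    qed
    have dec: "av N - c = (1 / real N) *\<^sub>R (S N - S (P*M)) + (real (P*M) / real N - 1) *\<^sub>R av (P*M) + (av (P*M) - c)"
      using PM0 N0 unfolding av_def by (simp add: algebra_simps scaleR_diff_right S_def)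
    have "norm (av N - c) \<le> norm ((1 / real N) *\<^sub>R (S N - S (P*M))) + norm ((real (P*M) / real N - 1) *\<^sub>R av (P*M)) + norm (av (P*M) - c)"
      unfolding dec by (rule order_trans[OF norm_triangle_ineq add_right_mono[OF norm_triangle_ineq]])
    also have "norm ((1 / real N) *\<^sub>R (S N - S (P*M))) \<le> real (N - P*M) / real N"
      using d1 N0 by (simp add: divide_right_mono)
    also have "norm ((real (P*M) / real N - 1) *\<^sub>R av (P*M)) \<le> \<bar>real (P*M) / real N - 1\<bar>"
      using avb by (simp add: mult_left_le)
    also have "norm (av (P*M) - c) \<le> r/2" using M0 MM0 by blast
    finally have A: "norm (av N - c) \<le> real (N - P*M) / real N + \<bar>real (P*M) / real N - 1\<bar> + r/2" by simp
    have "real (N - P*M) \<le> real P" using MN2 MN1 by linarith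
    then have e1: "real (N - P*M) / real N \<le> real P / real N" using N0
      by (intro divide_right_mono) auto
    have rr: "real (P*M) \<le> real N" using MN1 by linarith
    have "real (P*M) / real N - 1 = - (real (N - P*M) / real N)" using MN1 N0
      by (simp add: field_simps of_nat_diff)
    then have e2: "\<bar>real (P*M) / real N - 1\<bar> = real (N - P*M) / real N" by simp
    have e3: "real P / real N < r / 8"
    proof -
      have "8 * real P / r < real N" using K NK by linarith
      then have "8 * real P < real N * r" using r by (simp add: field_simps)
      then show ?thesis using N0 r by (simp add: field_simps)
    qed
    have "norm (av N - c) < r" using A e1 e2 e3 r by linarith
    then show "norm ((1 / real N) *\<^sub>R (\<Sum>n<N. x n) - c) < r" unfolding av_def S_def .
  qed
qed




lemma sum_lessThan_plus: fixes f :: "nat \<Rightarrow> 'a::comm_monoid_add" shows "(\<Sum>k<m+n. f k) = (\<Sum>k<m. f k) + (\<Sum>k<n. f (m+k))"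
  by (induction n) (simp_all add: ac_simps)

lemma sum_block: fixes f :: "nat \<Rightarrow> 'a::comm_monoid_add" shows "(\<Sum>n<P*M. f n) = (\<Sum>a<M. \<Sum>r<P. f (P*a + r))"
proof (induction M)
  case 0 then show ?case by simp
next
  case (Suc M)
  have "P * Suc M = P * M + P" by simp
  then show ?case using Suc by (simp only: sum_lessThan_plus sum.lessThan_Suc)
qed

lemma wq_block: assumes q: "q \<ge> 2" and r: "r < q ^ L"
  shows "wq q (q ^ L * a + r) = a * (\<Sum>i<L. q ^ i) + wq q a + wq q r"
  using r
proof (induction L arbitrary: r)
  case 0 then show ?case by (simp add: wq_0)
next
  case (Suc L)
  define r' where "r' = r div q"
  define t where "t = r mod q"
  have rr: "r = q * r' + t" unfolding r'_def t_def by simp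
  have t: "t < q" unfolding t_def using q by simp
  have r': "r' < q ^ L" using Suc.prems unfolding r'_def using q
    by (simp add: div_less_iff_less_mult mult.commute)
  have e: "q ^ Suc L * a + r = q * (q ^ L * a + r') + t" using rr by (simp add: algebra_simps)
  have "wq q (q ^ Suc L * a + r) = q ^ L * a + r' + wq q (q ^ L * a + r')"
    using e wq_step[OF q t] by simp
  also have "\<dots> = q ^ L * a + r' + (a * (\<Sum>i<L. q ^ i) + wq q a + wq q r')" using Suc.IH[OF r'] by simp
  also have "wq q r = r' + wq q r'" using rr wq_step[OF q t] by simp
  then have "q ^ L * a + r' + (a * (\<Sum>i<L. q ^ i) + wq q a + wq q r') = a * (\<Sum>i<Suc L. q ^ i) + wq q a + wq q r"
    by (simp add: algebra_simps)
  finally show ?case .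
qed

definition ee :: "real \<Rightarrow> complex" where "ee x = cis (2 * pi * x)"

lemma ee_add: "ee (x + y) = ee x * ee y"
  unfolding ee_def by (simp add: cis_mult distrib_left)

lemma ee_int: "x \<in> \<int> \<Longrightarrow> ee x = 1"
  unfolding ee_def by simp

lemma norm_ee [simp]: "norm (ee x) = 1"
  unfolding ee_def by simp

lemma ee_eq_1: assumes "ee x = 1" shows "x \<in> \<int>"
proof -
  have "cos (2 * pi * x) = 1" using assms unfolding ee_def by (metis cis.sel(1) one_complex.sel(1))
  then have "\<exists>n::int. 2 * pi * x = of_int n * 2 * pi" using cos_one_2pi_int by blast
  then obtain n :: int where "2 * pi * x = of_int n * 2 * pi" by blast
  then have "x = of_int n" by simp
  then show ?thesis by simp
qed

definition hh :: "nat \<Rightarrow> real \<Rightarrow> real \<Rightarrow> nat \<Rightarrow> complex" where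
  "hh q al be n = ee (al * real (wq q n) + be * real n)"

definition QQ :: "nat \<Rightarrow> real \<Rightarrow> complex" where
  "QQ q be = (\<Sum>t<q. ee (be * real t))"

lemma norm_hh [simp]: "norm (hh q al be n) = 1" unfolding hh_def by simp

lemma hh_step: assumes q: "q \<ge> 2" and t: "t < q"
  shows "hh q al be (q * a + t) = ee (be * real t) * hh q al (al + real q * be) a"
proof -
  have "al * real (wq q (q * a + t)) + be * real (q * a + t) = be * real t + (al * real (wq q a) + (al + real q * be) * real a)"
    using wq_step[OF q t] by (simp add: algebra_simps)
  then show ?thesis unfolding hh_def by (simp add: ee_add)
qed

lemma HH_step: assumes q: "q \<ge> 2"
  shows "(\<Sum>n<q*N. hh q al be n) = QQ q be * (\<Sum>n<N. hh q al (al + real q * be) n)"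
proof -
  have "(\<Sum>n<q*N. hh q al be n) = (\<Sum>a<N. \<Sum>t<q. hh q al be (q*a + t))" by (rule sum_block)
  also have "\<dots> = (\<Sum>a<N. \<Sum>t<q. ee (be * real t) * hh q al (al + real q * be) a)"
    using hh_step[OF q] by simp
  also have "\<dots> = QQ q be * (\<Sum>n<N. hh q al (al + real q * be) n)"
    unfolding QQ_def by (simp add: sum_distrib_left sum_distrib_right mult.commute)
  finally show ?thesis .
qed

definition bs :: "nat \<Rightarrow> real \<Rightarrow> real \<Rightarrow> nat \<Rightarrow> real" where
  "bs q al be i = ((\<lambda>b. al + real q * b) ^^ i) be"

lemma bs_0 [simp]: "bs q al be 0 = be" by (simp add: bs_def)
lemma bs_Suc: "bs q al be (Suc i) = bs q al (al + real q * be) i"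
  unfolding bs_def by (simp add: funpow_Suc_right del: funpow.simps)
lemma bs_Suc2: "bs q al be (Suc i) = al + real q * bs q al be i"
  unfolding bs_def by simp

lemma HH_iter: assumes q: "q \<ge> 2"
  shows "(\<Sum>n<q^L*N. hh q al be n) = (\<Prod>i<L. QQ q (bs q al be i)) * (\<Sum>n<N. hh q al (bs q al be L) n)"
proof (induction L arbitrary: be)
  case 0 then show ?case by simp
next
  case (Suc L)
  have "(\<Sum>n<q^Suc L*N. hh q al be n) = (\<Sum>n<q*(q^L*N). hh q al be n)" by (simp add: mult.assoc)
  also have "\<dots> = QQ q be * (\<Sum>n<q^L*N. hh q al (al + real q * be) n)" by (rule HH_step[OF q])
  also have "\<dots> = QQ q be * ((\<Prod>i<L. QQ q (bs q al (al + real q * be) i)) * (\<Sum>n<N. hh q al (bs q al (al + real q * be) L) n))"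
    using Suc.IH by simp
  also have "\<dots> = (\<Prod>i<Suc L. QQ q (bs q al be i)) * (\<Sum>n<N. hh q al (bs q al be (Suc L)) n)"
    by (simp add: bs_Suc prod.lessThan_Suc_shift del: prod.lessThan_Suc)
  finally show ?case .
qed




lemma norm_QQ: "norm (QQ q be) \<le> real q"
  unfolding QQ_def using sum_norm_le[of "\<lambda>t. ee (be * real t)" q] by simp

lemma QQ_per: assumes d: "d > 0"
  shows "QQ q (of_int k / real d) = QQ q (of_int (k mod int d) / real d)"
proof -
  have "ee (of_int k / real d * real t) = ee (of_int (k mod int d) / real d * real t)" for t
  proof -
    have k: "of_int k = real d * of_int (k div int d) + of_int (k mod int d)"
      by (metis div_mult_mod_eq of_int_add of_int_mult of_int_of_nat_eq mult.commute)
    have "of_int k / real d * real t = of_int (k mod int d) / real d * real t + of_int (k div int d * int t)"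
      using d by (subst k) (simp add: field_simps)
    then show ?thesis by (simp add: ee_add ee_int)
  qed
  then show ?thesis unfolding QQ_def by simp
qed

lemma norm_one_plus_ee: assumes "x \<notin> \<int>" shows "norm (1 + ee x) < 2"
proof -
  have c1: "cos (2 * pi * x) \<noteq> 1"
  proof
    assume "cos (2 * pi * x) = 1"
    then have "\<exists>n::int. 2 * pi * x = of_int n * 2 * pi" using cos_one_2pi_int by blast
    then obtain n :: int where "2 * pi * x = of_int n * 2 * pi" by blast
    then have "x = of_int n" by simp
    then show False using assms by simp
  qed
  have c2: "cos (2 * pi * x) < 1" using c1 cos_le_one[of "2*pi*x"] by linarith
  have "norm (1 + ee x) ^ 2 = (1 + cos (2*pi*x))^2 + (sin (2*pi*x))^2"
    unfolding ee_def by (simp add: cmod_power2)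
  also have "\<dots> = 2 + 2 * cos (2*pi*x)" using sin_cos_squared_add[of "2*pi*x"]
    by (simp add: power2_eq_square algebra_simps)
  also have "\<dots> < 2 ^ 2" using c2 by simp
  finally have "norm (1 + ee x) ^ 2 < 2 ^ 2" .
  then show ?thesis by (rule power_less_imp_less_base) simp
qed

lemma QQ_lt: assumes q: "q \<ge> 2" and x: "x \<notin> \<int>" shows "norm (QQ q x) < real q"
proof -
  have "QQ q x = (\<Sum>t<2 + (q-2). ee (x * real t))" unfolding QQ_def using q by (simp only: le_add_diff_inverse)
  also have "\<dots> = (1 + ee x) + (\<Sum>t<q-2. ee (x * real (2 + t)))"
    by (simp only: sum_lessThan_plus) (simp add: numeral_2_eq_2 ee_int del: of_nat_add)
  finally have e: "QQ q x = (1 + ee x) + (\<Sum>t<q-2. ee (x * real (2 + t)))" .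
  have "norm (QQ q x) \<le> norm (1 + ee x) + norm (\<Sum>t<q-2. ee (x * real (2 + t)))"
    unfolding e by (rule norm_triangle_ineq)
  also have "norm (\<Sum>t<q-2. ee (x * real (2 + t))) \<le> real (q - 2)"
    by (rule sum_norm_le) simp
  finally show ?thesis using norm_one_plus_ee[OF x] q by linarith
qed




lemma not_int_frac: assumes "0 < k" "k < d" shows "real k / real d \<notin> \<int>"
proof
  assume "real k / real d \<in> \<int>"
  then obtain n :: int where n: "real k / real d = of_int n" by (auto elim: Ints_cases)
  have d0: "real d > 0" using assms by simp
  then have "real k = of_int n * real d" using n by (simp add: field_simps)
  then have e: "int k = n * int d" by (metis of_int_eq_iff of_int_mult of_int_of_nat_eq)
  show False
  proof (cases "n \<ge> 1")
    case True
    then have "n * int d \<ge> int d" using assms by (simp add: mult_le_cancel_right1)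
    then show False using e assms by linarith
  next
    case False
    then have "n \<le> 0" by simp
    then have "n * int d \<le> 0" using assms by (simp add: mult_nonpos_nonneg)
    then show False using e assms by linarith
  qed
qed

lemma mean_hh:
  assumes q: "q \<ge> 2" and d: "d \<ge> 2"
  shows "\<exists>c. (\<lambda>N. (1 / real N) *\<^sub>R (\<Sum>n<N. hh q (of_int A / real d) (of_int B / real d) n)) \<longlonglongrightarrow> c"
proof -
  define al where "al = of_int A / real d"
  define be where "be = of_int B / real d"
  define ks where "ks i = ((\<lambda>k. A + int q * k) ^^ i) B" for i
  have ks_Suc: "ks (Suc i) = A + int q * ks i" for i unfolding ks_def by simp
  have d0: "real d > 0" using d by simp
  have bsk: "bs q al be i = of_int (ks i) / real d" for i
  proof (induction i)
    case 0 then show ?case by (simp add: ks_def be_def)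
  next
    case (Suc i)
    then show ?case using d0 by (simp add: bs_Suc2 ks_Suc al_def field_simps)
  qed
  have bd: "\<And>n. norm (hh q al be n) \<le> 1" by simp
  show ?thesis
  proof (cases "\<exists>K. \<forall>i\<ge>K. int d dvd ks i")
    case True
    then obtain K where K: "\<forall>i\<ge>K. int d dvd ks i" by blast
    have "int d dvd ks (Suc K)" "int d dvd ks K" using K by auto
    then have "int d dvd A" unfolding ks_Suc by (simp add: dvd_add_left_iff)
    then obtain a' where a': "A = int d * a'" by blast
    obtain k' where k': "ks K = int d * k'" using K by blast
    have h1: "hh q al (bs q al be K) n = 1" for n
    proof -
      have "al * real (wq q n) + bs q al be K * real n = of_int (a' * int (wq q n) + k' * int n)"
        using d0 unfolding bsk k' unfolding al_def a' by simp
      then show ?thesis unfolding hh_def by (simp add: ee_int)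
    qed
    define PP where "PP = (\<Prod>i<K. QQ q (bs q al be i))"
    define c where "c = (1 / real (q ^ K)) *\<^sub>R PP"
    have "(\<lambda>N. (1 / real N) *\<^sub>R (\<Sum>n<N. hh q al be n)) \<longlonglongrightarrow> c"
    proof (rule avg_lim[OF bd])
      fix e :: real assume e: "e > 0"
      show "\<exists>P\<ge>1. \<exists>M0. \<forall>M\<ge>M0. norm ((1 / real (P * M)) *\<^sub>R (\<Sum>n<P * M. hh q al be n) - c) \<le> e"
      proof (intro exI conjI allI impI)
        show "1 \<le> q ^ K" using q by simp
        fix M :: nat assume M: "M \<ge> 1"
        have "(\<Sum>n<q ^ K * M. hh q al be n) = PP * of_nat M"
          unfolding HH_iter[OF q] PP_def h1 by simp
        moreover have "real (q ^ K) > 0" using q by simp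
        ultimately have "(1 / real (q ^ K * M)) *\<^sub>R (\<Sum>n<q ^ K * M. hh q al be n) - c = 0"
          unfolding c_def using M by (simp add: scaleR_conv_of_real field_simps)
        then show "norm ((1 / real (q ^ K * M)) *\<^sub>R (\<Sum>n<q ^ K * M. hh q al be n) - c) \<le> e"
          using e by simp
      qed
    qed
    then show ?thesis unfolding al_def be_def by blast
  next
    case False
    then have bad: "\<forall>K. \<exists>i\<ge>K. \<not> int d dvd ks i" by blast
    define rho where "rho = Max ((\<lambda>k::nat. norm (QQ q (real k / real d)) / real q) ` {1..<d})"
    have q0: "real q > 0" using q by simp
    have fin: "finite ((\<lambda>k::nat. norm (QQ q (real k / real d)) / real q) ` {1..<d})" by simp
    have ne: "((\<lambda>k::nat. norm (QQ q (real k / real d)) / real q) ` {1..<d}) \<noteq> {}" using d by simp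
    have rho1: "rho < 1" unfolding rho_def
    proof (subst Max_less_iff[OF fin ne], intro ballI)
      fix y assume "y \<in> (\<lambda>k::nat. norm (QQ q (real k / real d)) / real q) ` {1..<d}"
      then obtain k where k: "k \<in> {1..<d}" and y: "y = norm (QQ q (real k / real d)) / real q" by blast
      have "norm (QQ q (real k / real d)) < real q" using k by (intro QQ_lt[OF q] not_int_frac) auto
      then show "y < 1" using y q0 by simp
    qed
    have rho0: "rho \<ge> 0"
    proof -
      have "norm (QQ q (real 1 / real d)) / real q \<le> rho" unfolding rho_def
        using d by (intro Max_ge[OF fin] image_eqI[where x=1]) auto
      moreover have "norm (QQ q (real 1 / real d)) / real q \<ge> 0" by simp
      ultimately show ?thesis by linarith
    qed
    have badb: "norm (QQ q (bs q al be i)) / real q \<le> rho" if nd: "\<not> int d dvd ks i" for i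
    proof -
      define k where "k = nat (ks i mod int d)"
      have km: "int k = ks i mod int d" unfolding k_def using d by simp
      have "k \<noteq> 0" using nd km by (simp add: dvd_eq_mod_eq_0)
      moreover have "k < d" using km d by (metis of_nat_less_iff pos_mod_bound of_nat_0_less_iff
          less_le_trans zero_less_numeral)
      ultimately have kin: "k \<in> {1..<d}" by simp
      have "QQ q (bs q al be i) = QQ q (real k / real d)"
        unfolding bsk using d by (subst QQ_per) (auto simp: km[symmetric])
      moreover have "norm (QQ q (real k / real d)) / real q \<le> rho" unfolding rho_def
        using kin by (intro Max_ge[OF fin] image_eqI[where x=k]) auto
      ultimately show ?thesis by simp
    qed
    define Bf where "Bf L = (\<Prod>i<L. norm (QQ q (bs q al be i))) / real q ^ L" for L
    have Bf_Suc: "Bf (Suc L) = Bf L * (norm (QQ q (bs q al be L)) / real q)" for L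
      unfolding Bf_def by simp
    have Bf0: "Bf L \<ge> 0" for L unfolding Bf_def by (simp add: prod_nonneg)
    have fle: "norm (QQ q (bs q al be L)) / real q \<le> 1" for L using norm_QQ q0 by simp
    have Bmono: "Bf j \<le> Bf L" if "L \<le> j" for j L
      using that
    proof (induction j rule: dec_induct)
      case base then show ?case by simp
    next
      case (step j)
      have "Bf (Suc j) \<le> Bf j * 1" unfolding Bf_Suc using Bf0 fle by (intro mult_left_mono) auto
      then show ?case using step by simp
    qed
    have pw: "\<exists>L. Bf L \<le> rho ^ c" for c
    proof (induction c)
      case 0
      have "Bf 0 \<le> 1" unfolding Bf_def by simp
      then show ?case by auto
    next
      case (Suc c)
      then obtain L where L: "Bf L \<le> rho ^ c" by blast
      obtain i where i: "i \<ge> L" "\<not> int d dvd ks i" using bad by blast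
      have "Bf (Suc i) \<le> Bf i * rho" unfolding Bf_Suc using Bf0 badb[OF i(2)] by (intro mult_left_mono) auto
      also have "\<dots> \<le> Bf L * rho" using Bmono[OF i(1)] rho0 by (intro mult_right_mono)
      also have "\<dots> \<le> rho ^ c * rho" using L rho0 by (intro mult_right_mono)
      finally show ?case by (auto simp: mult.commute)
    qed
    have "(\<lambda>N. (1 / real N) *\<^sub>R (\<Sum>n<N. hh q al be n)) \<longlonglongrightarrow> 0"
    proof (rule avg_lim[OF bd])
      fix e :: real assume e: "e > 0"
      obtain c where c: "rho ^ c < e" using real_arch_pow_inv[OF e rho1] by blast
      obtain L where L: "Bf L \<le> rho ^ c" using pw by blast
      show "\<exists>P\<ge>1. \<exists>M0. \<forall>M\<ge>M0. norm ((1 / real (P * M)) *\<^sub>R (\<Sum>n<P * M. hh q al be n) - 0) \<le> e"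
      proof (intro exI conjI allI impI)
        show "1 \<le> q ^ L" using q by simp
        fix M :: nat assume M: "M \<ge> 1"
        have qL: "real (q ^ L) > 0" using q by simp
        have "norm (\<Sum>n<q ^ L * M. hh q al be n) = (\<Prod>i<L. norm (QQ q (bs q al be i))) * norm (\<Sum>n<M. hh q al (bs q al be L) n)"
          unfolding HH_iter[OF q] by (simp add: norm_mult prod_norm)
        also have "\<dots> \<le> (\<Prod>i<L. norm (QQ q (bs q al be i))) * real M"
          by (intro mult_left_mono sum_norm_le) (simp_all add: prod_nonneg)
        finally have A: "norm (\<Sum>n<q ^ L * M. hh q al be n) \<le> (\<Prod>i<L. norm (QQ q (bs q al be i))) * real M" .
        have "norm ((1 / real (q ^ L * M)) *\<^sub>R (\<Sum>n<q ^ L * M. hh q al be n) - 0) = norm (\<Sum>n<q ^ L * M. hh q al be n) / real (q ^ L * M)"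
          by simp
        also have "\<dots> \<le> (\<Prod>i<L. norm (QQ q (bs q al be i))) * real M / real (q ^ L * M)"
          using A by (intro divide_right_mono) auto
        also have "\<dots> = Bf L" unfolding Bf_def using M qL by simp
        finally show "norm ((1 / real (q ^ L * M)) *\<^sub>R (\<Sum>n<q ^ L * M. hh q al be n) - 0) \<le> e"
          using L c by linarith
      qed
    qed
    then show ?thesis unfolding al_def be_def by blast
  qed
qed




lemma ee_pow: "ee (real j * x) = ee x ^ j"
  unfolding ee_def by (simp add: DeMoivre mult.left_commute)

lemma int_frac_dvd: assumes d: "d > 0" and h: "of_int X / real d \<in> \<int>" shows "int d dvd X"
proof -
  obtain n :: int where n: "of_int X / real d = of_int n" using h by (auto elim: Ints_cases)
  then have "of_int X = of_int n * real d" using d by (simp add: field_simps)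
  then have "X = n * int d" by (metis of_int_eq_iff of_int_mult of_int_of_nat_eq)
  then show ?thesis by simp
qed

lemma ortho: assumes d: "d > 0"
  shows "(\<Sum>j<d. ee (real j * of_int X / real d)) = (if int d dvd X then of_nat d else 0)"
proof (cases "int d dvd X")
  case True
  then obtain m where m: "X = int d * m" by blast
  have "ee (real j * of_int X / real d) = 1" for j
    using d by (intro ee_int) (simp add: m)
  then show ?thesis using True by simp
next
  case False
  define z where "z = ee (of_int X / real d)"
  have z1: "z \<noteq> 1" using False int_frac_dvd[OF d] ee_eq_1 unfolding z_def by blast
  have "(\<Sum>j<d. ee (real j * of_int X / real d)) = (\<Sum>j<d. z ^ j)"
    unfolding z_def by (simp add: ee_pow[symmetric])
  also have "\<dots> = (z ^ d - 1) / (z - 1)" by (rule geometric_sum[OF z1])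
  also have "z ^ d = 1" unfolding z_def using d by (simp add: ee_pow[symmetric] ee_int)
  finally show ?thesis using False by simp
qed

lemma card_sum: fixes N :: nat shows "real (card {n. n < N \<and> P n}) = (\<Sum>n<N. (if P n then 1 else 0))"
proof -
  have e: "{n. n < N \<and> P n} = {n \<in> {..<N}. P n}" by auto
  have "real (card {n \<in> {..<N}. P n}) = (\<Sum>n\<in>{n \<in> {..<N}. P n}. 1)" by (rule real_of_card)
  also have "\<dots> = (\<Sum>n<N. (if P n then 1 else 0))" by (rule sum.inter_filter) (rule finite_lessThan)
  finally show ?thesis by (simp only: e)
qed

lemma part_a:
  assumes q: "q \<ge> 2" and d: "d \<ge> 2"
  shows "density_exists q d (0, tw, 0, t1, t0)"
proof -
  define X where "X n = tw * int (wq q n) + t1 * int n + t0" for n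
  have sv: "seqval q (0, tw, 0, t1, t0) n = X n" for n unfolding seqval_def X_def by simp
  define I where "I n = (if X n mod int d = 0 then (1::complex) else 0)" for n
  define E where "E j = ee (real j * of_int t0 / real d)" for j
  define G where "G j n = hh q (of_int (int j * tw) / real d) (of_int (int j * t1) / real d) n" for j n
  have d0: "d > 0" "real d > 0" using d by auto
  have Ie: "I n = (1 / of_nat d) * (\<Sum>j<d. E j * G j n)" for n
  proof -
    have "ee (real j * of_int (X n) / real d) = E j * G j n" for j
    proof -
      have "real j * of_int (X n) / real d = real j * of_int t0 / real d +
         (of_int (int j * tw) / real d * real (wq q n) + of_int (int j * t1) / real d * real n)"
        unfolding X_def using d0 by (simp add: field_simps)
      then show ?thesis unfolding hh_def E_def G_def by (simp add: ee_add)
    qed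
    then have A: "(\<Sum>j<d. ee (real j * of_int (X n) / real d)) = (\<Sum>j<d. E j * G j n)" by simp
    have B: "(\<Sum>j<d. ee (real j * of_int (X n) / real d)) = (if int d dvd X n then of_nat d else 0)"
      by (rule ortho[OF d0(1)])
    show ?thesis
    proof (cases "int d dvd X n")
      case True
      then have "(\<Sum>j<d. E j * G j n) = of_nat d" using A B by simp
      then show ?thesis unfolding I_def using True d0 by (simp add: dvd_eq_mod_eq_0)
    next
      case False
      then have "(\<Sum>j<d. E j * G j n) = 0" using A B by simp
      then show ?thesis unfolding I_def using False by (simp add: dvd_eq_mod_eq_0)
    qed
  qed
  have lims: "\<forall>j. \<exists>c. (\<lambda>N. (1 / real N) *\<^sub>R (\<Sum>n<N. G j n)) \<longlonglongrightarrow> c"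
    unfolding G_def by (intro allI) (rule mean_hh[OF q d])
  from choice[OF this] obtain cf where cf: "\<And>j. (\<lambda>N. (1 / real N) *\<^sub>R (\<Sum>n<N. G j n)) \<longlonglongrightarrow> cf j"
    by blast
  have sI: "(\<Sum>n<N. I n) = (1 / of_nat d) * (\<Sum>j<d. E j * (\<Sum>n<N. G j n))" for N
  proof -
    have "(\<Sum>n<N. I n) = (1 / of_nat d) * (\<Sum>n<N. \<Sum>j<d. E j * G j n)"
      unfolding Ie by (simp add: sum_distrib_left)
    also have "(\<Sum>n<N. \<Sum>j<d. E j * G j n) = (\<Sum>j<d. \<Sum>n<N. E j * G j n)" by (rule sum.swap)
    also have "\<dots> = (\<Sum>j<d. E j * (\<Sum>n<N. G j n))" by (simp add: sum_distrib_left)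
    finally show ?thesis .
  qed
  have avI: "(1 / real N) *\<^sub>R (\<Sum>n<N. I n) = (1 / of_nat d) * (\<Sum>j<d. E j * ((1 / real N) *\<^sub>R (\<Sum>n<N. G j n)))" for N
    unfolding sI by (simp add: scaleR_conv_of_real sum_distrib_left mult_ac)
  have "(\<lambda>N. (1 / real N) *\<^sub>R (\<Sum>n<N. I n)) \<longlonglongrightarrow> (1 / of_nat d) * (\<Sum>j<d. E j * cf j)"
    unfolding avI by (intro tendsto_mult tendsto_const tendsto_sum cf)
  then have "(\<lambda>N. Re ((1 / real N) *\<^sub>R (\<Sum>n<N. I n))) \<longlonglongrightarrow> Re ((1 / of_nat d) * (\<Sum>j<d. E j * cf j))"
    by (rule tendsto_Re)
  moreover have eqN: "Re ((1 / real N) *\<^sub>R (\<Sum>n<N. I n)) = real (gamma N q d (0, tw, 0, t1, t0)) / real N" for N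
  proof -
    have "real (gamma N q d (0, tw, 0, t1, t0)) = (\<Sum>n<N. (if X n mod int d = 0 then 1 else 0))"
      unfolding gamma_def sv by (rule card_sum)
    moreover have "Re (\<Sum>n<N. I n) = (\<Sum>n<N. (if X n mod int d = 0 then 1 else 0))"
      unfolding I_def Re_sum by (intro sum.cong) auto
    ultimately show ?thesis by (simp add: scaleR_conv_of_real)
  qed
  ultimately have "(\<lambda>N. real (gamma N q d (0, tw, 0, t1, t0)) / real N) \<longlonglongrightarrow> Re ((1 / of_nat d) * (\<Sum>j<d. E j * cf j))"
    by (simp only: eqN)
  then show ?thesis unfolding density_exists_def convergent_def by blast
qed




definition cL :: "nat \<Rightarrow> nat \<Rightarrow> nat" where "cL q L = (\<Sum>i<L. q ^ i)"
definition WS :: "nat \<Rightarrow> nat \<Rightarrow> nat" where "WS q L = (\<Sum>t<q ^ L. wq q t)"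

lemma sum_wq_block: assumes q: "q \<ge> 2"
  shows "(\<Sum>i<q^L * a. wq q i) = (\<Sum>b<a. q ^ L * (b * cL q L + wq q b) + WS q L)"
proof -
  have "(\<Sum>i<q^L * a. wq q i) = (\<Sum>b<a. \<Sum>t<q^L. wq q (q^L * b + t))" by (rule sum_block)
  also have "\<dots> = (\<Sum>b<a. \<Sum>t<q^L. (b * cL q L + wq q b) + wq q t)"
    using wq_block[OF q] unfolding cL_def by (intro sum.cong refl) (simp add: add.assoc)
  also have "\<dots> = (\<Sum>b<a. q ^ L * (b * cL q L + wq q b) + WS q L)"
    unfolding WS_def by (simp add: sum.distrib)
  finally show ?thesis .
qed

lemma uq_block: assumes q: "q \<ge> 2" and r: "r < q ^ L"
  shows "uq q (q^L * a + r) = (\<Sum>b<a. q ^ L * (b * cL q L + wq q b) + WS q L)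
           + (r + 1) * (a * cL q L + wq q a) + uq q r"
proof -
  have u: "uq q n = (\<Sum>i<Suc n. wq q i)" for n unfolding uq_def by (simp add: lessThan_Suc_atMost)
  have "uq q (q^L * a + r) = (\<Sum>i<q^L * a + Suc r. wq q i)" unfolding u by simp
  also have "\<dots> = (\<Sum>i<q^L * a. wq q i) + (\<Sum>t<Suc r. wq q (q^L * a + t))" by (rule sum_lessThan_plus)
  also have "(\<Sum>t<Suc r. wq q (q^L * a + t)) = (\<Sum>t<Suc r. (a * cL q L + wq q a) + wq q t)"
    using wq_block[OF q] r unfolding cL_def by (intro sum.cong refl) (simp add: add.assoc)
  also have "\<dots> = (r + 1) * (a * cL q L + wq q a) + uq q r"
    unfolding u by (simp add: sum.distrib)
  finally show ?thesis using sum_wq_block[OF q] by simp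
qed

lemma WS_Suc: assumes q: "q \<ge> 2"
  shows "\<exists>Y. WS q (Suc L) = q ^ L * Y + q * WS q L"
proof -
  have "WS q (Suc L) = (\<Sum>i<q^L * q. wq q i)" unfolding WS_def by (simp add: mult.commute)
  also have "\<dots> = (\<Sum>b<q. q ^ L * (b * cL q L + wq q b) + WS q L)" by (rule sum_wq_block[OF q])
  also have "\<dots> = q ^ L * (\<Sum>b<q. b * cL q L + wq q b) + q * WS q L"
    by (simp add: sum.distrib sum_distrib_left[symmetric])
  finally show ?thesis by blast
qed

lemma WS_dvd: assumes q: "q \<ge> 2" shows "q ^ L dvd WS q (Suc L)"
proof (induction L)
  case 0 then show ?case by simp
next
  case (Suc L)
  obtain Y where Y: "WS q (Suc (Suc L)) = q ^ Suc L * Y + q * WS q (Suc L)" using WS_Suc[OF q] by blast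
  have "q ^ Suc L dvd q * WS q (Suc L)" using Suc by (simp add: mult_dvd_mono)
  then show ?case unfolding Y by simp
qed

lemma tri_block: fixes q a r :: nat assumes L: "L \<ge> 1"
  shows "\<exists>Y. (q^L * a + r) * (q^L * a + r + 1) div 2 = r * (r + 1) div 2 + q ^ (L - 1) * Y"
proof -
  define Z :: nat where "Z = q * a * (q^L * a + 2 * r + 1)"
  have ev: "even Z"
  proof (cases "even q")
    case True then show ?thesis unfolding Z_def by simp
  next
    case False
    then have "odd (q ^ L)" by simp
    then show ?thesis unfolding Z_def by (cases "even a") auto
  qed
  have qL: "q ^ L = q ^ (L - 1) * q" using L by (metis Suc_diff_le diff_Suc_1 power_Suc2)
  have "(q^L * a + r) * (q^L * a + r + 1) = r * (r + 1) + q ^ (L - 1) * Z"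
    unfolding Z_def qL by (simp add: algebra_simps)
  moreover have "even (r * (r + 1))" by simp
  ultimately have "(q^L * a + r) * (q^L * a + r + 1) div 2 = r * (r + 1) div 2 + q ^ (L - 1) * (Z div 2)"
    using ev by (auto elim!: evenE)
  then show ?thesis by blast
qed




definition Fb :: "nat \<Rightarrow> int \<times> int \<times> int \<times> int \<times> int \<Rightarrow> nat \<Rightarrow> int \<Rightarrow> int" where
  "Fb q s r z = (case s of (tu, tw, t2, t1, t0) \<Rightarrow>
     tu * ((int r + 1) * z + int (uq q r)) + tw * (z + int (wq q r)) + t2 * int (r * (r + 1) div 2) + t1 * int r + t0)"

lemma seq_block:
  assumes q: "q \<ge> 2" and dm: "d dvd q ^ m" and r: "r < q ^ Suc m"
  shows "seqval q s (q ^ Suc m * a + r) mod int d = Fb q s r (int ((a * cL q (Suc m) + wq q a) mod d)) mod int d"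
proof -
  obtain tu tw t2 t1 t0 where s: "s = (tu, tw, t2, t1, t0)" by (cases s) auto
  define L where "L = Suc m"
  define Zn where "Zn = a * cL q L + wq q a"
  define S where "S = (\<Sum>b<a. q ^ L * (b * cL q L + wq q b) + WS q L)"
  define n where "n = q ^ L * a + r"
  have rL: "r < q ^ L" using r unfolding L_def .
  have dL: "d dvd q ^ L" using dm unfolding L_def by (simp add: dvd_mult2)
  have dW: "d dvd WS q L" unfolding L_def using dm WS_dvd[OF q, of m] dvd_trans by blast
  have dS: "d dvd S" unfolding S_def using dL dW by (intro dvd_sum) simp
  have U: "uq q n = S + (r + 1) * Zn + uq q r" unfolding n_def S_def Zn_def by (rule uq_block[OF q rL])
  have W: "wq q n = Zn + wq q r" unfolding n_def Zn_def cL_def using wq_block[OF q rL] by simp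
  obtain Y where T: "n * (n + 1) div 2 = r * (r + 1) div 2 + q ^ m * Y"
    using tri_block[of L q a r] unfolding n_def L_def by auto
  have diff1: "seqval q s n - Fb q s r (int Zn) = tu * int S + t2 * int (q ^ m * Y) + t1 * int (q ^ L * a)"
    unfolding seqval_def Fb_def s using U W T unfolding n_def by (simp add: algebra_simps)
  have "int d dvd tu * int S + t2 * int (q ^ m * Y) + t1 * int (q ^ L * a)"
  proof -
    have "int d dvd int S" using dS by simp
    moreover have "int d dvd int (q ^ m * Y)" by (subst int_dvd_int_iff) (rule dvd_mult2[OF dm])
    moreover have "int d dvd int (q ^ L * a)" by (subst int_dvd_int_iff) (rule dvd_mult2[OF dL])
    ultimately show ?thesis by (simp add: dvd_add)
  qed
  then have A: "int d dvd seqval q s n - Fb q s r (int Zn)" unfolding diff1 .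
  have diff2: "Fb q s r (int Zn) - Fb q s r (int (Zn mod d)) = (tu * (int r + 1) + tw) * (int Zn - int (Zn mod d))"
    unfolding Fb_def s by (simp add: algebra_simps)
  have "int Zn = int d * int (Zn div d) + int (Zn mod d)"
    by (metis div_mult_mod_eq of_nat_add of_nat_mult mult.commute)
  then have "int Zn - int (Zn mod d) = int d * int (Zn div d)" by simp
  then have "int d dvd int Zn - int (Zn mod d)" by simp
  then have B: "int d dvd Fb q s r (int Zn) - Fb q s r (int (Zn mod d))" unfolding diff2 by simp
  have "int d dvd seqval q s n - Fb q s r (int (Zn mod d))"
    using dvd_add[OF A B] by simp
  then show ?thesis unfolding n_def Zn_def L_def by (simp add: mod_eq_dvd_iff)
qed




lemma part_b:
  assumes q: "q \<ge> 2" and d: "d \<ge> 2" and dm: "d dvd q ^ m"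
  shows "density_exists q d s"
proof -
  define P where "P = q ^ Suc m"
  define Cc where "Cc = cL q (Suc m)"
  define x where "x n = (if seqval q s n mod int d = 0 then 1 else (0::real))" for n
  define ind where "ind c a = (if (a * Cc + wq q a) mod d = c then 1 else (0::real))" for c a
  define gc where "gc c M = real (gamma M q d (0, 1, 0, int Cc, - int c))" for c M
  define fr where "fr r c = (if Fb q s r (int c) mod int d = 0 then 1 else (0::real))" for r c
  have d0: "d > 0" using d by simp
  have P1: "P \<ge> 1" unfolding P_def using q by simp
  have gc_eq: "gc c M = (\<Sum>a<M. ind c a)" if c: "c < d" for c M
  proof -
    have "seqval q (0, 1, 0, int Cc, - int c) a mod int d = 0 \<longleftrightarrow> (a * Cc + wq q a) mod d = c" for a
    proof -
      have sv: "seqval q (0, 1, 0, int Cc, - int c) a = int (a * Cc + wq q a) - int c"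
        unfolding seqval_def by (simp add: algebra_simps)
      have "(int (a * Cc + wq q a) - int c) mod int d = 0 \<longleftrightarrow> int (a * Cc + wq q a) mod int d = int c mod int d"
        by (simp add: mod_eq_dvd_iff dvd_eq_mod_eq_0[symmetric])
      also have "int c mod int d = int c" using c by simp
      also have "int (a * Cc + wq q a) mod int d = int ((a * Cc + wq q a) mod d)" by (simp add: zmod_int)
      finally show ?thesis unfolding sv by simp
    qed
    then show ?thesis unfolding gc_def gamma_def ind_def by (simp add: card_sum)
  qed
  have conv: "\<forall>c. \<exists>l. (\<lambda>M. gc c M / real M) \<longlonglongrightarrow> l"
    unfolding gc_def using part_a[OF q d] unfolding density_exists_def convergent_def by blast
  from choice[OF conv] obtain lc where lc: "\<And>c. (\<lambda>M. gc c M / real M) \<longlonglongrightarrow> lc c" by blast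
  have xblock: "x (P * a + r) = (\<Sum>c<d. fr r c * ind c a)" if r: "r < P" for a r
  proof -
    have "x (P * a + r) = fr r ((a * Cc + wq q a) mod d)"
      unfolding x_def fr_def P_def Cc_def using seq_block[OF q dm, where r=r and a=a and s=s] r unfolding P_def by simp
    also have "\<dots> = (\<Sum>c<d. if (a * Cc + wq q a) mod d = c then fr r c else 0)"
      using d0 by (simp add: sum.delta)
    also have "\<dots> = (\<Sum>c<d. fr r c * ind c a)" unfolding ind_def by (intro sum.cong) auto
    finally show ?thesis .
  qed
  have sblock: "(\<Sum>n<P * M. x n) = (\<Sum>r<P. \<Sum>c<d. fr r c * gc c M)" for M
  proof -
    have "(\<Sum>n<P * M. x n) = (\<Sum>a<M. \<Sum>r<P. x (P * a + r))" by (rule sum_block)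
    also have "\<dots> = (\<Sum>a<M. \<Sum>r<P. \<Sum>c<d. fr r c * ind c a)"
      using xblock by (intro sum.cong refl) auto
    also have "\<dots> = (\<Sum>r<P. \<Sum>a<M. \<Sum>c<d. fr r c * ind c a)" by (rule sum.swap)
    also have "\<dots> = (\<Sum>r<P. \<Sum>c<d. \<Sum>a<M. fr r c * ind c a)" by (intro sum.cong refl sum.swap)
    also have "\<dots> = (\<Sum>r<P. \<Sum>c<d. fr r c * gc c M)"
      using gc_eq by (intro sum.cong refl) (simp add: sum_distrib_left)
    finally show ?thesis .
  qed
  define K where "K = (\<Sum>r<P. \<Sum>c<d. fr r c / real P * lc c)"
  have avP: "(1 / real (P * M)) *\<^sub>R (\<Sum>n<P * M. x n) = (\<Sum>r<P. \<Sum>c<d. fr r c / real P * (gc c M / real M))" for M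
    unfolding sblock by (simp add: sum_distrib_left field_simps)
  have limP: "(\<lambda>M. (1 / real (P * M)) *\<^sub>R (\<Sum>n<P * M. x n)) \<longlonglongrightarrow> K"
    unfolding avP K_def by (intro tendsto_sum tendsto_mult tendsto_const lc)
  have bd: "\<And>n. norm (x n) \<le> 1" unfolding x_def by simp
  have "(\<lambda>N. (1 / real N) *\<^sub>R (\<Sum>n<N. x n)) \<longlonglongrightarrow> K"
  proof (rule avg_lim[OF bd])
    fix e :: real assume e: "e > 0"
    obtain M0 where "\<forall>M\<ge>M0. norm ((1 / real (P * M)) *\<^sub>R (\<Sum>n<P * M. x n) - K) < e"
      using LIMSEQ_D[OF limP e] by blast
    then show "\<exists>P\<ge>1. \<exists>M0. \<forall>M\<ge>M0. norm ((1 / real (P * M)) *\<^sub>R (\<Sum>n<P * M. x n) - K) \<le> e"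
      using P1 by (intro exI[of _ P] conjI exI[of _ M0]) (auto simp: less_imp_le)
  qed
  moreover have eqN: "(1 / real N) *\<^sub>R (\<Sum>n<N. x n) = real (gamma N q d s) / real N" for N
    unfolding gamma_def x_def by (simp add: card_sum)
  ultimately have "(\<lambda>N. real (gamma N q d s) / real N) \<longlonglongrightarrow> K" by (simp only: eqN)
  then show ?thesis unfolding density_exists_def convergent_def by blast
qed

theorem theorem3p1:
  fixes q d :: nat
  assumes "q \<ge> 2" and "d \<ge> 2"
  shows "(\<forall>tw t1 t0 :: int. density_exists q d (0, tw, 0, t1, t0))
       \<and> ((\<exists>n::nat. d dvd q ^ n) \<longrightarrow> (\<forall>s. density_exists q d s))"
  using part_a[OF assms] part_b[OF assms] by blast


end
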